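(* Let $R$ be a unital associative ring, $n=3$, and let $\Omega$ be $\Phi^k$ or $\Psi^k$ for some integer $k$. For $$A=\begin{pmatrix}1&1&1\\1&a&b\\1&c&d\end{pmatrix}\in{\rm dom}(\Omega)\quad\text{write}\quad \Omega(A)=\begin{pmatrix}1&1&1\\1&\alpha&\beta\\1&\gamma&\delta\end{pmatrix},$$ so that $\alpha,\beta,\gamma,\delta$ are functions of $(a,b,c,d)$, and write $\alpha=f(a,b,c,d)$. Then ${\rm dom}(\Omega)$ is invariant under the permutations $(a,b,c,d)\mapsto(b,a,d,c)$, $(c,d,a,b)$, $(d,c,b,a)$ of the entries, and $$\beta=f(b,a,d,c),\quad\gamma=f(c,d,a,b),\quad\delta=f(d,c,b,a).$$
   Context: $R^*$: units of $R$. $M_3^*(R)$: invertible $3\times3$ matrices; $M_3^\star(R)$: matrices with all entries in $R^*$. $J_1(M)=M^{-1}$ on $M_3^*(R)$; $J_2(M)_{jk}=(M_{kj})^{-1}$ on $M_3^\star(R)$; $J=J_2\circ J_1$, $J^{-1}=J_1\circ J_2$, where $g\circ f$ has domain $\{x\in{\rm dom}(f):f(x)\in{\rm dom}(g)\}$. $\widehat M_3(R)$: matrices whose first row and column consist of $1$'s. For $A=\{a_{j,k}\}\in M_3^\star(R)$: $\Lambda^L(A)_{j,k}=a_{1,1}a_{j,1}^{-1}a_{j,k}a_{1,k}^{-1}$, $\Lambda^R(A)_{j,k}=a_{j,1}^{-1}a_{j,k}a_{1,k}^{-1}a_{1,1}$. $\Phi(A)=J_2(\Lambda^L(A^{-1}))$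 with ${\rm dom}(\Phi)={\rm dom}(J)\cap\widehat M_3(R)\cap M_3^\star(R)$; its inverse is $\Phi^{-1}(A)=\Lambda^R(J^{-1}(A))$ with domain $\widehat M_3(R)\cap\{M\in{\rm dom}(J^{-1}):J^{-1}(M)\in M_3^\star(R)\}$. $\Psi=J_2\circ\Phi\circ J_2$, with inverse $J_2\circ\Phi^{-1}\circ J_2$. Integer powers are iterated compositions (negative powers using the inverse maps) with natural domains. *)

theory Defs
  imports "HOL-Analysis.Analysis" "HOL-Library.Numeral_Type"
begin

text \<open>The paper's indices 1,2,3 correspond to the elements 0,1,2 of the index type 3.
  Partial maps are modelled as option-valued functions; composition with natural
  domain is map composition.\<close>

type_synonym 'a mat3 = "'a^3^3"

definition unitR :: "'a::ring_1 \<Rightarrow> bool" where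
  "unitR x \<longleftrightarrow> (\<exists>y. x * y = 1 \<and> y * x = 1)"

definition uinv :: "'a::ring_1 \<Rightarrow> 'a" where
  "uinv x = (SOME y. x * y = 1 \<and> y * x = 1)"

definition allunits :: "'a::ring_1 mat3 \<Rightarrow> bool" where
  "allunits M \<longleftrightarrow> (\<forall>j k. unitR (M$j$k))"

definition hatM :: "'a::ring_1 mat3 \<Rightarrow> bool" where
  "hatM M \<longleftrightarrow> (\<forall>j. M$0$j = 1 \<and> M$j$0 = 1)"

definition J1 :: "'a::ring_1 mat3 \<Rightarrow> 'a mat3 option" where
  "J1 M = (if invertible M then Some (matrix_inv M) else None)"

definition J2 :: "'a::ring_1 mat3 \<Rightarrow> 'a mat3 option" where
  "J2 M = (if allunits M then Some (\<chi> j k. uinv (M$k$j)) else None)"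

definition J :: "'a::ring_1 mat3 \<Rightarrow> 'a mat3 option" where
  "J = J2 \<circ>\<^sub>m J1"

definition Jinv :: "'a::ring_1 mat3 \<Rightarrow> 'a mat3 option" where
  "Jinv = J1 \<circ>\<^sub>m J2"

definition LamL :: "'a::ring_1 mat3 \<Rightarrow> 'a mat3" where
  "LamL A = (\<chi> j k. A$0$0 * uinv (A$j$0) * A$j$k * uinv (A$0$k))"

definition LamR :: "'a::ring_1 mat3 \<Rightarrow> 'a mat3" where
  "LamR A = (\<chi> j k. uinv (A$j$0) * A$j$k * uinv (A$0$k) * A$0$0)"

definition Phi :: "'a::ring_1 mat3 \<Rightarrow> 'a mat3 option" where
  "Phi A = (if A \<in> dom J \<and> hatM A \<and> allunits A
            then J2 (LamL (matrix_inv A)) else None)"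

definition PhiInv :: "'a::ring_1 mat3 \<Rightarrow> 'a mat3 option" where
  "PhiInv A = (if hatM A then
                 (case Jinv A of None \<Rightarrow> None
                  | Some M \<Rightarrow> if allunits M then Some (LamR M) else None)
               else None)"

definition Psi :: "'a::ring_1 mat3 \<Rightarrow> 'a mat3 option" where
  "Psi = J2 \<circ>\<^sub>m Phi \<circ>\<^sub>m J2"

definition PsiInv :: "'a::ring_1 mat3 \<Rightarrow> 'a mat3 option" where
  "PsiInv = J2 \<circ>\<^sub>m PhiInv \<circ>\<^sub>m J2"

definition mpow :: "('b \<Rightarrow> 'b option) \<Rightarrow> ('b \<Rightarrow> 'b option) \<Rightarrow> int \<Rightarrow> 'b \<Rightarrow> 'b option" where
  "mpow f g k = (if 0 \<le> k then ((\<lambda>h. f \<circ>\<^sub>m h) ^^ nat k) Some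
                 else ((\<lambda>h. g \<circ>\<^sub>m h) ^^ nat (- k)) Some)"

definition Hm :: "'a::ring_1 \<Rightarrow> 'a \<Rightarrow> 'a \<Rightarrow> 'a \<Rightarrow> 'a mat3" where
  "Hm a b c d = (\<chi> j k. if j = 0 \<or> k = 0 then 1
                        else if j = 1 then (if k = 1 then a else b)
                        else (if k = 1 then c else d))"

end

theory Submission
  imports Defs
begin

lemma ex3: "(x::3) = 0 \<or> x = 1 \<or> x = 2"
proof -
  have "(3::3) = 0" by simp
  then show ?thesis using exhaust_3[of x] by metis
qed

definition sw :: "3 \<Rightarrow> 3" where "sw i = (if i = 1 then 2 else if i = 2 then 1 else i)"
definition ok :: "(3 \<Rightarrow> 3) \<Rightarrow> bool" where "ok p \<longleftrightarrow> (\<forall>i. p (p i) = i) \<and> p 0 = 0"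
definition pm :: "(3 \<Rightarrow> 3) \<Rightarrow> (3 \<Rightarrow> 3) \<Rightarrow> 'a mat3 \<Rightarrow> 'a mat3" where
  "pm p q A = (\<chi> i j. A$p i$q j)"

lemma ok_id: "ok id" by (simp add: ok_def)
lemma ok_sw: "ok sw" unfolding ok_def sw_def by simp

lemma pm_nth[simp]: "pm p q A $ i $ j = A $ p i $ q j" by (simp add: pm_def)

lemma pm_pm: "ok p \<Longrightarrow> ok q \<Longrightarrow> pm p q (pm p q A) = A"
  by (simp add: vec_eq_iff ok_def)

lemma pm_mult:
  fixes A B :: "'a::ring_1 mat3"
  assumes "ok q" shows "pm p q A ** pm q r B = pm p r (A ** B)"
proof -
  have "(\<Sum>k\<in>UNIV. A $ p i $ q k * B $ q k $ r j) = (\<Sum>k\<in>UNIV. A $ p i $ k * B $ k $ r j)" for i j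
    by (rule sum.reindex_bij_witness[where i=q and j=q]) (use assms in \<open>auto simp: ok_def\<close>)
  then show ?thesis by (simp add: vec_eq_iff matrix_matrix_mult_def)
qed

lemma pm_mat1: "ok p \<Longrightarrow> pm p p (mat 1 :: 'a::ring_1 mat3) = mat 1"
  unfolding ok_def by (simp add: vec_eq_iff mat_def) metis

lemma inv_unique:
  fixes A X Y :: "'a::ring_1 mat3"
  assumes "A ** X = mat 1" "Y ** A = mat 1" shows "X = Y"
proof -
  have "X = (Y ** A) ** X" using assms by simp
  also have "\<dots> = Y ** (A ** X)" by (simp add: matrix_mul_assoc)
  finally show ?thesis using assms by simp
qed

lemma matrix_inv_props:
  fixes A :: "'a::ring_1 mat3"
  assumes "invertible A" shows "A ** matrix_inv A = mat 1 \<and> matrix_inv A ** A = mat 1"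
  using assms unfolding invertible_def matrix_inv_def by (rule someI_ex)

lemma pm_invertible:
  fixes A :: "'a::ring_1 mat3"
  assumes "ok p" "ok q" "invertible A"
  shows "invertible (pm p q A) \<and> matrix_inv (pm p q A) = pm q p (matrix_inv A)"
proof -
  note m = matrix_inv_props[OF assms(3)]
  have 1: "pm p q A ** pm q p (matrix_inv A) = mat 1"
    using m assms by (simp add: pm_mult pm_mat1)
  have 2: "pm q p (matrix_inv A) ** pm p q A = mat 1"
    using m assms by (simp add: pm_mult pm_mat1)
  have inv: "invertible (pm p q A)" using 1 2 unfolding invertible_def by blast
  show ?thesis using inv inv_unique[OF 1] matrix_inv_props[OF inv] by metis
qed

lemma pm_invertible_iff:
  fixes A :: "'a::ring_1 mat3"
  assumes "ok p" "ok q" shows "invertible (pm p q A) \<longleftrightarrow> invertible A"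
  using pm_invertible[OF assms] pm_invertible[OF assms, of "pm p q A"] pm_pm[OF assms] by metis

definition EQ :: "('a::ring_1 mat3 \<Rightarrow> 'a mat3 option) \<Rightarrow> bool" where
  "EQ f \<longleftrightarrow> (\<forall>p q A. ok p \<longrightarrow> ok q \<longrightarrow> f (pm p q A) = map_option (pm p q) (f A))"
definition SW :: "('a::ring_1 mat3 \<Rightarrow> 'a mat3 option) \<Rightarrow> bool" where
  "SW f \<longleftrightarrow> (\<forall>p q A. ok p \<longrightarrow> ok q \<longrightarrow> f (pm p q A) = map_option (pm q p) (f A))"

lemma EQ_EQ: "EQ f \<Longrightarrow> EQ g \<Longrightarrow> EQ (f \<circ>\<^sub>m g)"
  unfolding EQ_def map_comp_def by (auto split: option.split)
lemma SW_SW: "SW f \<Longrightarrow> SW g \<Longrightarrow> EQ (f \<circ>\<^sub>m g)"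
  unfolding EQ_def SW_def map_comp_def by (auto split: option.split)
lemma SW_EQ: "SW f \<Longrightarrow> EQ g \<Longrightarrow> SW (f \<circ>\<^sub>m g)"
  unfolding EQ_def SW_def map_comp_def by (auto split: option.split)
lemma EQ_SW: "EQ f \<Longrightarrow> SW g \<Longrightarrow> SW (f \<circ>\<^sub>m g)"
  unfolding EQ_def SW_def map_comp_def by (auto split: option.split)

lemma J1_SW: "SW J1"
  unfolding SW_def J1_def using pm_invertible pm_invertible_iff by fastforce

lemma allunits_pm: "ok p \<Longrightarrow> ok q \<Longrightarrow> allunits (pm p q A) \<longleftrightarrow> allunits A"
  unfolding allunits_def ok_def by (auto) metis

lemma hatM_pm: "ok p \<Longrightarrow> ok q \<Longrightarrow> hatM (pm p q A) \<longleftrightarrow> hatM A"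
  unfolding hatM_def ok_def by (auto) metis+

lemma J2_SW: "SW J2"
  unfolding SW_def J2_def by (auto simp: allunits_pm vec_eq_iff)

lemma J_EQ: "EQ J" unfolding J_def by (rule SW_SW[OF J2_SW J1_SW])
lemma Jinv_EQ: "EQ Jinv" unfolding Jinv_def by (rule SW_SW[OF J1_SW J2_SW])

lemma LamL_pm: "ok p \<Longrightarrow> ok q \<Longrightarrow> LamL (pm p q B) = pm p q (LamL B)"
  unfolding ok_def LamL_def by (simp add: vec_eq_iff)
lemma LamR_pm: "ok p \<Longrightarrow> ok q \<Longrightarrow> LamR (pm p q B) = pm p q (LamR B)"
  unfolding ok_def LamR_def by (simp add: vec_eq_iff)

lemma dom_EQ: "EQ f \<Longrightarrow> ok p \<Longrightarrow> ok q \<Longrightarrow> pm p q A \<in> dom f \<longleftrightarrow> A \<in> dom f"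
  unfolding EQ_def by auto

lemma domJ_inv: "A \<in> dom J \<Longrightarrow> invertible A"
  unfolding J_def J1_def map_comp_def by (auto split: if_splits)

lemma Phi_EQ: "EQ Phi"
  unfolding EQ_def
proof (intro allI impI)
  fix p q and A :: "'a mat3" assume pq: "ok p" "ok q"
  show "Phi (pm p q A) = map_option (pm p q) (Phi A)"
  proof (cases "A \<in> dom J \<and> hatM A \<and> allunits A")
    case True
    then have "invertible A" using domJ_inv by blast
    then have "matrix_inv (pm p q A) = pm q p (matrix_inv A)" using pm_invertible pq by blast
    moreover have "pm p q A \<in> dom J" using True pq dom_EQ[OF J_EQ] by blast
    moreover have "J2 (pm q p (LamL (matrix_inv A))) = map_option (pm p q) (J2 (LamL (matrix_inv A)))"
      using J2_SW pq unfolding SW_def by blast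
    ultimately show ?thesis using True pq
      by (simp add: Phi_def hatM_pm allunits_pm LamL_pm)
  next
    case False
    moreover have "pm p q A \<in> dom J \<longleftrightarrow> A \<in> dom J" using dom_EQ[OF J_EQ pq] .
    ultimately have "\<not> (pm p q A \<in> dom J \<and> hatM (pm p q A) \<and> allunits (pm p q A))"
      using pq by (simp add: hatM_pm allunits_pm)
    then have "Phi (pm p q A) = None" unfolding Phi_def by (rule if_not_P)
    moreover have "Phi A = None" using False unfolding Phi_def by (rule if_not_P)
    ultimately show ?thesis by simp
  qed
qed

lemma PhiInv_EQ: "EQ PhiInv"
  unfolding EQ_def
proof (intro allI impI)
  fix p q and A :: "'a mat3" assume pq: "ok p" "ok q"
  have j: "Jinv (pm p q A) = map_option (pm p q) (Jinv A)" using pq Jinv_EQ unfolding EQ_def by blast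
  show "PhiInv (pm p q A) = map_option (pm p q) (PhiInv A)"
  proof (cases "Jinv A")
    case None then show ?thesis using j by (simp add: PhiInv_def)
  next
    case (Some N) then show ?thesis using j pq by (simp add: PhiInv_def hatM_pm allunits_pm LamR_pm)
  qed
qed

lemma Psi_EQ: "EQ Psi" unfolding Psi_def
  by (rule SW_SW[OF SW_EQ[OF J2_SW Phi_EQ] J2_SW])
lemma PsiInv_EQ: "EQ PsiInv" unfolding PsiInv_def
  by (rule SW_SW[OF SW_EQ[OF J2_SW PhiInv_EQ] J2_SW])

lemma EQ_Some: "EQ Some" unfolding EQ_def by simp

lemma EQ_pow: "EQ f \<Longrightarrow> EQ (((\<lambda>h. f \<circ>\<^sub>m h) ^^ n) Some)"
  by (induction n) (auto simp: EQ_Some EQ_EQ)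

lemma mpow_EQ: "EQ f \<Longrightarrow> EQ g \<Longrightarrow> EQ (mpow f g k)"
  unfolding mpow_def by (simp add: EQ_pow)

definition HO :: "('a::ring_1 mat3 \<Rightarrow> 'a mat3 option) \<Rightarrow> bool" where
  "HO f \<longleftrightarrow> (\<forall>x y. f x = Some y \<longrightarrow> hatM y)"

lemma HO_pow: "HO f \<Longrightarrow> hatM x \<Longrightarrow> ((\<lambda>h. f \<circ>\<^sub>m h) ^^ n) Some x = Some y \<Longrightarrow> hatM y"
  by (induction n arbitrary: y) (auto simp: HO_def map_comp_def split: option.splits)

lemma mpow_hat: "HO f \<Longrightarrow> HO g \<Longrightarrow> hatM x \<Longrightarrow> mpow f g k x = Some y \<Longrightarrow> hatM y"
  unfolding mpow_def using HO_pow by (auto split: if_splits)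

lemma unit_inv: "unitR x \<Longrightarrow> x * uinv x = 1 \<and> uinv x * x = 1"
  unfolding unitR_def uinv_def by (rule someI_ex)

lemma unit_l: "unitR u \<Longrightarrow> u * (uinv u * w) = w"
  by (metis mult.assoc mult_1_left unit_inv)
lemma unit_r: "unitR u \<Longrightarrow> uinv u * (u * w) = w"
  by (metis mult.assoc mult_1_left unit_inv)

lemma unit_a: "unitR u \<Longrightarrow> x * uinv u * u = x"
  by (metis mult.assoc mult_1_right unit_inv)
lemma unit_b: "unitR u \<Longrightarrow> x * u * uinv u = x"
  by (metis mult.assoc mult_1_right unit_inv)

lemma uinv_1: "uinv (1::'a::ring_1) = 1"
  unfolding uinv_def by (rule some_equality) auto

lemma J2_hat: "J2 L = Some M \<Longrightarrow> hatM L \<Longrightarrow> hatM M"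
  unfolding J2_def hatM_def by (auto split: if_splits simp: uinv_1)

lemma HO_Phi: "HO Phi"
  unfolding HO_def
proof (intro allI impI)
  fix x y :: "'a mat3" assume h: "Phi x = Some y"
  then have d: "x \<in> dom J" and e: "J2 (LamL (matrix_inv x)) = Some y"
    by (auto simp: Phi_def split: if_splits)
  from d have "allunits (matrix_inv x)"
    unfolding J_def J1_def J2_def map_comp_def by (auto split: if_splits)
  then have "hatM (LamL (matrix_inv x))"
    unfolding hatM_def LamL_def allunits_def
    by (simp add: unit_a unit_b unit_inv)
  then show "hatM y" using J2_hat e by blast
qed

lemma HO_PhiInv: "HO PhiInv"
  unfolding HO_def
proof (intro allI impI)
  fix x y :: "'a mat3" assume h: "PhiInv x = Some y"
  then obtain M where "allunits M" "y = LamR M"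
    by (auto simp: PhiInv_def split: if_splits option.splits)
  then show "hatM y"
    unfolding hatM_def LamR_def allunits_def
    by (simp add: unit_a unit_b unit_inv)
qed

lemma HO_J2comp: "HO f \<Longrightarrow> HO (J2 \<circ>\<^sub>m f \<circ>\<^sub>m g)"
  unfolding HO_def map_comp_def using J2_hat by (fastforce split: option.splits)

lemma Hm_hat: "hatM (Hm a b c d)" unfolding hatM_def Hm_def by simp

lemma hat_Hm: assumes "hatM M" shows "M = Hm (M$1$1) (M$1$2) (M$2$1) (M$2$2)"
proof -
  have "M$i$j = Hm (M$1$1) (M$1$2) (M$2$1) (M$2$2) $i$j" for i j
  proof -
    have h: "M$0$j = 1" "M$i$0 = 1" for i j using assms unfolding hatM_def by auto
    have "(1::3) \<noteq> 2" "(0::3) \<noteq> 1" "(0::3) \<noteq> 2" by simp_all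
    note ne = this
    from ex3[of i] ex3[of j] show ?thesis
      by (elim disjE) (simp_all add: Hm_def h ne)
  qed
  then show ?thesis unfolding vec_eq_iff by blast
qed

lemma sw_simps: "sw 0 = 0" "sw 1 = 2" "sw 2 = 1" unfolding sw_def by simp_all

lemma Hm1: "Hm b a d c = pm id sw (Hm a b c d)"
  unfolding Hm_def vec_eq_iff using ex3 by (auto simp: sw_def)

lemma Hm2: "Hm c d a b = pm sw id (Hm a b c d)"
  unfolding Hm_def vec_eq_iff using ex3 by (auto simp: sw_def)

lemma Hm3: "Hm d c b a = pm sw sw (Hm a b c d)"
  unfolding Hm_def vec_eq_iff using ex3 by (auto simp: sw_def)

lemma HO_Psi: "HO Psi" unfolding Psi_def by (rule HO_J2comp[OF HO_Phi])
lemma HO_PsiInv: "HO PsiInv" unfolding PsiInv_def by (rule HO_J2comp[OF HO_PhiInv])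

theorem corollary1:
  fixes \<Omega> :: "'a::ring_1 mat3 \<Rightarrow> 'a mat3 option"
    and k :: int and a b c d :: 'a and M :: "'a mat3"
  assumes "\<Omega> = mpow Phi PhiInv k \<or> \<Omega> = mpow Psi PsiInv k"
    and "\<Omega> (Hm a b c d) = Some M"
  shows "\<exists>M1 M2 M3. \<Omega> (Hm b a d c) = Some M1 \<and> \<Omega> (Hm c d a b) = Some M2
           \<and> \<Omega> (Hm d c b a) = Some M3
           \<and> M = Hm (M$1$1) (M1$1$1) (M2$1$1) (M3$1$1)"
proof -
  have E: "EQ \<Omega>" using assms(1)
    by (elim disjE) (simp_all add: mpow_EQ Phi_EQ PhiInv_EQ Psi_EQ PsiInv_EQ)
  have hM: "hatM M" using assms(1)
  proof
    assume "\<Omega> = mpow Phi PhiInv k"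
    then have "mpow Phi PhiInv k (Hm a b c d) = Some M" using assms(2) by simp
    then show "hatM M" by (rule mpow_hat[OF HO_Phi HO_PhiInv Hm_hat])
  next
    assume "\<Omega> = mpow Psi PsiInv k"
    then have "mpow Psi PsiInv k (Hm a b c d) = Some M" using assms(2) by simp
    then show "hatM M" by (rule mpow_hat[OF HO_Psi HO_PsiInv Hm_hat])
  qed
  have e: "\<Omega> (pm p q (Hm a b c d)) = Some (pm p q M)" if "ok p" "ok q" for p q
  proof -
    have "\<Omega> (pm p q (Hm a b c d)) = map_option (pm p q) (\<Omega> (Hm a b c d))"
      using E that unfolding EQ_def by blast
    then show ?thesis using assms(2) by simp
  qed
  have 1: "\<Omega> (Hm b a d c) = Some (pm id sw M)" unfolding Hm1[of b a d c] by (rule e[OF ok_id ok_sw])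
  have 2: "\<Omega> (Hm c d a b) = Some (pm sw id M)" unfolding Hm2[of c d a b] by (rule e[OF ok_sw ok_id])
  have 3: "\<Omega> (Hm d c b a) = Some (pm sw sw M)" unfolding Hm3[of d c b a] by (rule e[OF ok_sw ok_sw])
  have r: "(pm id sw M)$1$1 = M$1$2" "(pm sw id M)$1$1 = M$2$1" "(pm sw sw M)$1$1 = M$2$2"
    by (simp_all add: sw_simps)
  have "M = Hm (M$1$1) ((pm id sw M)$1$1) ((pm sw id M)$1$1) ((pm sw sw M)$1$1)"
    unfolding r by (rule hat_Hm[OF hM])
  then show ?thesis using 1 2 3 by blast
qed

end
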